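(* Let $\varphi:(0,1]\to[0,1]$ be an increasing submultiplicative function (i.e. $\varphi(xy)\le\varphi(x)\varphi(y)$ for $x,y\in(0,1]$). The following are equivalent: (1) there exists $\lambda\in(0,1)$ with $\varphi(\lambda)<1$; (2) there is $C>0$ with $\varphi(x)\le C(1+\log(1/x))^{-1}$ for all $x\in(0,1]$; (3) for every $p>0$ there is $C_p>0$ with $\varphi(x)\le C_p(1+\log(1/x))^{-p}$ for all $x\in(0,1]$; (4) $\lim_{x\to0}\varphi(x)=0$. *)

theory Defs
  imports "HOL-Analysis.Analysis"
begin

end

theory Submission
  imports Defs "HOL-Real_Asymp.Real_Asymp"
begin

lemma bound_lemma:
  fixes b p :: real
  assumes "b > 0" "p > 0"
  shows "\<exists>M>0. \<forall>x\<in>{0<..1}. x powr b * (1 + ln (1/x)) powr p \<le> M"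
proof -
  have "((\<lambda>x::real. x powr b * (1 + ln (1/x)) powr p) \<longlongrightarrow> 0) (at_right 0)"
    using assms by real_asymp
  hence "eventually (\<lambda>x. x powr b * (1 + ln (1/x)) powr p < 1) (at_right (0::real))"
    by (rule order_tendstoD) simp
  then obtain d where d: "d > 0" "\<And>x. x > 0 \<Longrightarrow> x < d \<Longrightarrow> x powr b * (1 + ln (1/x)) powr p < 1"
    unfolding eventually_at_right_field by auto
  define e where "e = min d 1"
  have e: "e > 0" "e \<le> 1" "e \<le> d" using d by (auto simp: e_def)
  define M where "M = 1 + (1 + ln (1/e)) powr p"
  have "M > 0" unfolding M_def by (simp add: add_pos_nonneg)
  moreover have "x powr b * (1 + ln (1/x)) powr p \<le> M" if x: "x \<in> {0<..1}" for x
  proof (cases "x < d")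
    case True
    have "x powr b * (1 + ln (1/x)) powr p < 1" using d(2)[of x] x True by auto
    moreover have "0 \<le> (1 + ln (1/e)) powr p" by simp
    ultimately show ?thesis unfolding M_def by linarith
  next
    case False
    hence xe: "e \<le> x" using e by simp
    have l0: "0 \<le> ln (1/x)" using x by simp
    have "ln (1/x) \<le> ln (1/e)" using xe x e by (simp add: ln_div)
    hence "(1 + ln (1/x)) powr p \<le> (1 + ln (1/e)) powr p"
      using l0 assms by (intro powr_mono2) auto
    moreover have "x powr b \<le> 1" using x assms by (simp add: powr_le1)
    moreover have "0 \<le> (1 + ln (1/x)) powr p" by simp
    ultimately have "x powr b * (1 + ln (1/x)) powr p \<le> 1 * (1 + ln (1/e)) powr p"
      by (intro mult_mono) auto
    thus ?thesis unfolding M_def by simp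
  qed
  ultimately show ?thesis by blast
qed

lemma one_to_three:
  fixes \<phi> :: "real \<Rightarrow> real"
  assumes range: "\<And>x. x \<in> {0<..1} \<Longrightarrow> \<phi> x \<in> {0..1}"
    and incr: "mono_on {0<..1} \<phi>"
    and submult: "\<And>x y. x \<in> {0<..1} \<Longrightarrow> y \<in> {0<..1} \<Longrightarrow> \<phi> (x * y) \<le> \<phi> x * \<phi> y"
    and l: "l \<in> {0<..<1}" "\<phi> l < 1"
    and p: "p > 0"
  shows "\<exists>C>0. \<forall>x\<in>{0<..1}. \<phi> x \<le> C * (1 + ln (1 / x)) powr (-p)"
proof -
  define q where "q = max (\<phi> l) (1/2)"
  have q: "0 < q" "q < 1" "\<phi> l \<le> q" using l by (auto simp: q_def)
  have pow: "\<phi> (l ^ n) \<le> q ^ n" for n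
  proof (induction n)
    case 0 thus ?case using range[of 1] by simp
  next
    case (Suc n)
    have ln: "l ^ n \<in> {0<..1}" using l by (simp add: power_le_one)
    have "\<phi> (l ^ Suc n) \<le> \<phi> l * \<phi> (l ^ n)" using submult[of l "l^n"] l ln by simp
    also have "\<dots> \<le> q * q ^ n"
      using range[OF ln] range[of l] l q Suc by (intro mult_mono) auto
    finally show ?case by simp
  qed
  define b where "b = ln q / ln l"
  have b: "b > 0" using q l unfolding b_def by (simp add: divide_neg_neg)
  have key: "\<phi> x \<le> (1/q) * x powr b" if x: "x \<in> {0<..1}" for x
  proof -
    define n where "n = nat (floor (ln x / ln l))"
    have lnl: "ln l < 0" using l by simp
    have r0: "ln x / ln l \<ge> 0" using x lnl by (simp add: divide_nonpos_neg)
    have n1: "real n \<le> ln x / ln l" unfolding n_def using r0 by linarith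
    have n2: "ln x / ln l - 1 \<le> real n" unfolding n_def using r0 by linarith
    have "real n * ln l \<ge> ln x" using n1 lnl by (simp add: pos_le_divide_eq neg_le_divide_eq mult.commute)
    hence "ln (l ^ n) \<ge> ln x" using l by (simp add: ln_realpow)
    hence "x \<le> l ^ n" using x l by simp
    moreover have "l ^ n \<in> {0<..1}" using l by (simp add: power_le_one)
    ultimately have "\<phi> x \<le> \<phi> (l ^ n)" using incr x by (auto simp: mono_on_def)
    also have "\<dots> \<le> q ^ n" by (rule pow)
    also have "\<dots> = q powr (real n)" using q by (simp add: powr_realpow)
    also have "\<dots> \<le> q powr (ln x / ln l - 1)" using q n2 by (intro powr_mono') auto
    also have "\<dots> = (1/q) * q powr (ln x / ln l)" using q by (simp add: powr_diff divide_inverse powr_minus)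
    also have "q powr (ln x / ln l) = x powr b"
      using q x unfolding b_def powr_def by simp
    finally show ?thesis .
  qed
  obtain M where M: "M > 0" "\<And>x. x\<in>{0<..1} \<Longrightarrow> x powr b * (1 + ln (1/x)) powr p \<le> M"
    using bound_lemma[OF b p] by blast
  have "\<phi> x \<le> (M / q) * (1 + ln (1 / x)) powr (-p)" if x: "x \<in> {0<..1}" for x
  proof -
    have L: "1 + ln (1/x) > 0" using x by (simp add: add_pos_nonneg)
    have "x powr b = (x powr b * (1 + ln (1/x)) powr p) * (1 + ln (1 / x)) powr (-p)"
      using L by (simp add: powr_minus field_simps)
    also have "\<dots> \<le> M * (1 + ln (1 / x)) powr (-p)"
      using M(2)[OF x] by (intro mult_right_mono) auto
    finally have "(1/q) * x powr b \<le> (1/q) * (M * (1 + ln (1 / x)) powr (-p))"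
      using q by (intro mult_left_mono) auto
    thus ?thesis using key[OF x] by simp
  qed
  thus ?thesis using M q by (intro exI[of _ "M/q"]) auto
qed

theorem corollary2p2:
  fixes \<phi> :: "real \<Rightarrow> real"
  assumes range: "\<And>x. x \<in> {0<..1} \<Longrightarrow> \<phi> x \<in> {0..1}"
    and incr: "mono_on {0<..1} \<phi>"
    and submult: "\<And>x y. x \<in> {0<..1} \<Longrightarrow> y \<in> {0<..1} \<Longrightarrow> \<phi> (x * y) \<le> \<phi> x * \<phi> y"
  shows "((\<exists>l\<in>{0<..<1}. \<phi> l < 1)
          \<longleftrightarrow> (\<exists>C>0. \<forall>x\<in>{0<..1}. \<phi> x \<le> C * (1 + ln (1 / x)) powr (-1)))
       \<and> ((\<exists>C>0. \<forall>x\<in>{0<..1}. \<phi> x \<le> C * (1 + ln (1 / x)) powr (-1))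
          \<longleftrightarrow> (\<forall>p::real>0. \<exists>C>0. \<forall>x\<in>{0<..1}. \<phi> x \<le> C * (1 + ln (1 / x)) powr (-p)))
       \<and> ((\<forall>p::real>0. \<exists>C>0. \<forall>x\<in>{0<..1}. \<phi> x \<le> C * (1 + ln (1 / x)) powr (-p))
          \<longleftrightarrow> (\<phi> \<longlongrightarrow> 0) (at_right 0))"
proof -
  let ?A = "\<exists>l\<in>{0<..<1}. \<phi> l < 1"
  let ?B = "\<exists>C>0. \<forall>x\<in>{0<..1}. \<phi> x \<le> C * (1 + ln (1 / x)) powr (-1)"
  let ?D = "\<forall>p::real>0. \<exists>C>0. \<forall>x\<in>{0<..1}. \<phi> x \<le> C * (1 + ln (1 / x)) powr (-p)"
  let ?E = "(\<phi> \<longlongrightarrow> 0) (at_right 0)"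
  have AD: "?A \<Longrightarrow> ?D" using one_to_three[OF range incr submult] by blast
  have DB: "?D \<Longrightarrow> ?B" by (metis zero_less_one)
  have BA: "?A" if ?B
  proof -
    obtain C where C: "C > 0" "\<And>x. x\<in>{0<..1} \<Longrightarrow> \<phi> x \<le> C * (1 + ln (1 / x)) powr (-1)"
      using \<open>?B\<close> by blast
    define x where "x = exp (-(C+1))"
    have x: "x \<in> {0<..<1}" using C unfolding x_def by auto
    have "ln (1/x) = C + 1" unfolding x_def by (simp add: ln_div)
    hence "\<phi> x \<le> C * (C + 2) powr (-1)" using C(2)[of x] x by (simp add: add.commute add.left_commute)
    also have "\<dots> = C / (C + 2)" using C by (simp add: powr_minus divide_inverse)
    also have "\<dots> < 1" using C by simp
    finally show ?thesis using x by blast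
  qed
  have DE: "?E" if ?D
  proof -
    obtain C where C: "C > 0" "\<And>x. x\<in>{0<..1} \<Longrightarrow> \<phi> x \<le> C * (1 + ln (1 / x)) powr (-1)"
      using \<open>?D\<close> by (metis zero_less_one)
    have lim: "((\<lambda>x::real. C * (1 + ln (1/x)) powr (-1)) \<longlongrightarrow> 0) (at_right 0)"
      using C by real_asymp
    have ev: "eventually (\<lambda>x::real. x \<in> {0<..1}) (at_right 0)"
      unfolding eventually_at_right_field by (intro exI[of _ 1]) auto
    show ?thesis
    proof (rule tendsto_sandwich[OF _ _ tendsto_const lim])
      show "\<forall>\<^sub>F x in at_right 0. 0 \<le> \<phi> x" using ev by eventually_elim (use range in auto)
      show "\<forall>\<^sub>F x in at_right 0. \<phi> x \<le> C * (1 + ln (1 / x)) powr (-1)"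
        using ev by eventually_elim (use C in auto)
    qed
  qed
  have EA: "?A" if ?E
  proof -
    have "eventually (\<lambda>x. \<phi> x < 1) (at_right (0::real))"
      using \<open>?E\<close> by (rule order_tendstoD) simp
    then obtain d where d: "d > 0" "\<And>x. x > 0 \<Longrightarrow> x < d \<Longrightarrow> \<phi> x < 1"
      unfolding eventually_at_right_field by auto
    define x where "x = min (d/2) (1/2)"
    have "x \<in> {0<..<1}" "\<phi> x < 1" using d unfolding x_def by auto
    thus ?thesis by blast
  qed
  show ?thesis using AD DB BA DE EA by blast
qed

end
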